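(* Let $n$ and $s$ be integers with $2\le s\le n$ and $n\geq 4$. Then $\kappa_s^*(K_n)=n-\lceil s/2\rceil$, where $K_n$ is the complete graph on $n$ vertices.
   Context: For $S\subseteq V(G)$ with $|S|\ge 2$, an $S$-Steiner tree of $G$ is a subtree $T$ of $G$ with $S\subseteq V(T)$ all of whose leaves belong to $S$. A family of $S$-Steiner trees $T_1,\dots,T_k$ is completely independent if for all $1\le p<q\le k$: $E(T_p)\cap E(T_q)=\emptyset$, $V(T_p)\cap V(T_q)=S$, and for any two vertices $x_1,x_2\in S$ the $(x_1,x_2)$-paths in $T_p$ and in $T_q$ are internally disjoint. $\kappa^*_G(S)$ is the maximum number of trees in a completely independent family of $S$-Steiner trees in $G$, and $\kappa_s^*(G)=\min\{\kappa^*_G(S): S\subseteq V(G),\ |S|=s\}$. *)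

theory Defs
  imports Complex_Main
begin

text \<open>Graphs are given by a vertex set V and a set E of 2-element edge sets.
A subgraph/tree is a pair (W, F) of a vertex set and an edge set.\<close>

definition is_path :: "'a set \<Rightarrow> 'a set set \<Rightarrow> 'a \<Rightarrow> 'a \<Rightarrow> 'a list \<Rightarrow> bool" where
  "is_path W F x y xs \<longleftrightarrow> xs \<noteq> [] \<and> hd xs = x \<and> last xs = y \<and> distinct xs \<and>
     set xs \<subseteq> W \<and> (\<forall>i. Suc i < length xs \<longrightarrow> {xs ! i, xs ! Suc i} \<in> F)"

definition is_cycle :: "'a set \<Rightarrow> 'a set set \<Rightarrow> 'a list \<Rightarrow> bool" where
  "is_cycle W F xs \<longleftrightarrow> length xs \<ge> 3 \<and> distinct xs \<and> set xs \<subseteq> W \<and>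
     (\<forall>i. Suc i < length xs \<longrightarrow> {xs ! i, xs ! Suc i} \<in> F) \<and> {last xs, hd xs} \<in> F"

definition is_tree :: "'a set \<Rightarrow> 'a set set \<Rightarrow> bool" where
  "is_tree W F \<longleftrightarrow> finite W \<and> W \<noteq> {} \<and> (\<forall>e\<in>F. card e = 2 \<and> e \<subseteq> W) \<and>
     (\<forall>x\<in>W. \<forall>y\<in>W. \<exists>xs. is_path W F x y xs) \<and> \<not> (\<exists>xs. is_cycle W F xs)"

definition tree_degree :: "'a set set \<Rightarrow> 'a \<Rightarrow> nat" where
  "tree_degree F v = card {e \<in> F. v \<in> e}"

definition steiner_tree :: "'a set \<Rightarrow> 'a set set \<Rightarrow> 'a set \<Rightarrow> 'a set \<times> 'a set set \<Rightarrow> bool" where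
  "steiner_tree V E S T \<longleftrightarrow> fst T \<subseteq> V \<and> snd T \<subseteq> E \<and> is_tree (fst T) (snd T) \<and>
     S \<subseteq> fst T \<and> (\<forall>v\<in>fst T. tree_degree (snd T) v = 1 \<longrightarrow> v \<in> S)"

definition interior :: "'a list \<Rightarrow> 'a set" where
  "interior xs = set (butlast (tl xs))"

definition cis_family ::
  "'a set \<Rightarrow> 'a set set \<Rightarrow> 'a set \<Rightarrow> nat \<Rightarrow> (nat \<Rightarrow> 'a set \<times> 'a set set) \<Rightarrow> bool" where
  "cis_family V E S k T \<longleftrightarrow> (\<forall>i<k. steiner_tree V E S (T i)) \<and>
     (\<forall>p q. p < q \<and> q < k \<longrightarrow>
        snd (T p) \<inter> snd (T q) = {} \<and> fst (T p) \<inter> fst (T q) = S \<and>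
        (\<forall>x1\<in>S. \<forall>x2\<in>S. \<forall>P Q. is_path (fst (T p)) (snd (T p)) x1 x2 P \<and>
             is_path (fst (T q)) (snd (T q)) x1 x2 Q \<longrightarrow> interior P \<inter> interior Q = {}))"

definition kappa_star :: "'a set \<Rightarrow> 'a set set \<Rightarrow> 'a set \<Rightarrow> nat" where
  "kappa_star V E S = Max {k. \<exists>T. cis_family V E S k T}"

definition kappa_s :: "'a set \<Rightarrow> 'a set set \<Rightarrow> nat \<Rightarrow> nat" where
  "kappa_s V E s = Min {kappa_star V E S | S. S \<subseteq> V \<and> card S = s}"

definition Kn_V :: "nat \<Rightarrow> nat set" where
  "Kn_V n = {..<n}"

definition Kn_E :: "nat \<Rightarrow> nat set set" where
  "Kn_E n = {{u, v} | u v. u < n \<and> v < n \<and> u \<noteq> v}"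

end

theory Submission
  imports Defs
begin

definition walk :: "'a set \<Rightarrow> 'a set set \<Rightarrow> 'a list \<Rightarrow> bool" where
  "walk W F xs \<longleftrightarrow> xs \<noteq> [] \<and> set xs \<subseteq> W \<and> (\<forall>i. Suc i < length xs \<longrightarrow> {xs ! i, xs ! Suc i} \<in> F)"

lemma is_path_walk: "is_path W F x y xs \<longleftrightarrow> walk W F xs \<and> hd xs = x \<and> last xs = y \<and> distinct xs"
  unfolding is_path_def walk_def by auto

lemma walk_Cons: "walk W F (x # xs) \<longleftrightarrow> x \<in> W \<and> (xs = [] \<or> ({x, hd xs} \<in> F \<and> walk W F xs))"
proof
  assume a: "walk W F (x # xs)"
  show "x \<in> W \<and> (xs = [] \<or> ({x, hd xs} \<in> F \<and> walk W F xs))"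
  proof (cases xs)
    case Nil then show ?thesis using a by (auto simp: walk_def)
  next
    case (Cons y ys)
    have "{x, y} \<in> F" using a Cons unfolding walk_def by (metis length_Cons nth_Cons_0 nth_Cons_Suc zero_less_Suc Suc_less_eq)
    moreover have "walk W F xs" using a Cons unfolding walk_def
      by (metis Suc_less_eq length_Cons list.distinct(1) list.set_intros(2) nth_Cons_Suc subset_code(1))
    ultimately show ?thesis using a Cons by (auto simp: walk_def)
  qed
next
  assume a: "x \<in> W \<and> (xs = [] \<or> ({x, hd xs} \<in> F \<and> walk W F xs))"
  show "walk W F (x # xs)"
  proof (cases xs)
    case Nil then show ?thesis using a by (auto simp: walk_def)
  next
    case (Cons y ys)
    show ?thesis unfolding walk_def
    proof (intro conjI allI impI)
      show "set (x # xs) \<subseteq> W" using a Cons by (auto simp: walk_def)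
      fix i assume "Suc i < length (x # xs)"
      then show "{(x # xs) ! i, (x # xs) ! Suc i} \<in> F" using a Cons
        by (cases i) (auto simp: walk_def)
    qed simp
  qed
qed

lemma walk_append: "walk W F (xs @ ys) \<Longrightarrow> ys \<noteq> [] \<Longrightarrow> walk W F ys"
  by (induction xs) (auto simp: walk_Cons)

lemma walk_concat: "walk W F xs \<Longrightarrow> walk W F ys \<Longrightarrow> last xs = hd ys \<Longrightarrow> walk W F (xs @ tl ys)"
proof (induction xs)
  case Nil then show ?case by (simp add: walk_def)
next
  case (Cons x xs)
  note IH = Cons.IH and pr = Cons.prems
  show ?case
  proof (cases xs)
    case Nil
    then show ?thesis using pr
      by (cases ys) (auto simp: walk_Cons)
  next
    case (Cons y zs)
    have "walk W F (xs @ tl ys)" using IH pr Cons by (auto simp: walk_Cons)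
    moreover have "hd (xs @ tl ys) = y" using Cons by simp
    ultimately show ?thesis using pr Cons by (auto simp: walk_Cons)
  qed
qed

lemma walk_rev: assumes "walk W F xs" shows "walk W F (rev xs)"
  unfolding walk_def
proof (intro conjI allI impI)
  show "rev xs \<noteq> []" "set (rev xs) \<subseteq> W" using assms by (auto simp: walk_def)
  fix i assume i: "Suc i < length (rev xs)"
  define j where "j = length xs - Suc (Suc i)"
  have j: "Suc j < length xs" using i by (simp add: j_def)
  have "{xs ! j, xs ! Suc j} \<in> F" using assms j by (auto simp: walk_def)
  moreover have "rev xs ! i = xs ! Suc j" "rev xs ! Suc i = xs ! j"
    using i by (auto simp: rev_nth j_def Suc_diff_Suc)
  ultimately show "{rev xs ! i, rev xs ! Suc i} \<in> F" by (simp add: insert_commute)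
qed

lemma walk_path: "walk W F xs \<Longrightarrow> \<exists>ys. walk W F ys \<and> distinct ys \<and> hd ys = hd xs \<and> last ys = last xs"
proof (induction xs)
  case Nil then show ?case by (simp add: walk_def)
next
  case (Cons x xs)
  show ?case
  proof (cases "xs = []")
    case True then show ?thesis using Cons.prems by (intro exI[of _ "[x]"]) auto
  next
    case False
    then have wx: "x \<in> W" "{x, hd xs} \<in> F" "walk W F xs" using Cons.prems by (auto simp: walk_Cons)
    then obtain ys where ys: "walk W F ys" "distinct ys" "hd ys = hd xs" "last ys = last xs"
      using Cons.IH by blast
    have ysne: "ys \<noteq> []" using ys(1) by (simp add: walk_def)
    show ?thesis
    proof (cases "x \<in> set ys")
      case True
      then obtain u v where uv: "ys = u @ x # v" by (meson split_list)
      show ?thesis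
        using ys uv walk_append[of W F u "x # v"] False by (intro exI[of _ "x # v"]) auto
    next
      case False
      then show ?thesis using ys wx ysne \<open>xs \<noteq> []\<close> by (intro exI[of _ "x # ys"]) (auto simp: walk_Cons)
    qed
  qed
qed

lemma last_concat: "last xs = hd ys \<Longrightarrow> ys \<noteq> [] \<Longrightarrow> xs \<noteq> [] \<Longrightarrow> last (xs @ tl ys) = last ys"
  by (cases ys) auto

lemma interior_sub:
  assumes P: "is_path W F x y P"
    and leaf: "\<And>a b c. {a,b} \<in> F \<Longrightarrow> {a,c} \<in> F \<Longrightarrow> b \<noteq> c \<Longrightarrow> a \<in> C"
  shows "interior P \<subseteq> C"
proof
  fix z assume "z \<in> interior P"
  then obtain j where j: "j < length (butlast (tl P))" "z = butlast (tl P) ! j"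
    unfolding interior_def by (metis in_set_conv_nth)
  have len: "Suc (Suc j) < length P" using j(1) by simp
  have z: "z = P ! Suc j" using j len by (simp add: nth_butlast nth_tl)
  have e1: "{P ! j, P ! Suc j} \<in> F" and e2: "{P ! Suc j, P ! Suc (Suc j)} \<in> F"
    using P len unfolding is_path_def by auto
  have d: "P ! j \<noteq> P ! Suc (Suc j)" using P len unfolding is_path_def
    by (simp add: nth_eq_iff_index_eq)
  show "z \<in> C" using leaf[of "P ! Suc j" "P ! j" "P ! Suc (Suc j)"] e1 e2 d z
    by (simp add: insert_commute)
qed

lemma gen_tree:
  assumes fin: "finite W" and edges: "\<forall>e\<in>F. card e = 2 \<and> e \<subseteq> W"
    and c0: "c0 \<in> W"
    and leaf: "\<And>a b c. {a,b} \<in> F \<Longrightarrow> {a,c} \<in> F \<Longrightarrow> b \<noteq> c \<Longrightarrow> a \<in> C"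
    and cC: "card C \<le> 2" "finite C"
    and reach: "\<forall>x\<in>W. x = c0 \<or> {x,c0} \<in> F \<or> (\<exists>y. {x,y} \<in> F \<and> {y,c0} \<in> F)"
  shows "is_tree W F" "\<And>x y P. is_path W F x y P \<Longrightarrow> interior P \<subseteq> C"
proof -
  show "\<And>x y P. is_path W F x y P \<Longrightarrow> interior P \<subseteq> C"
    using interior_sub leaf by metis
  have tow: "\<exists>p. walk W F p \<and> hd p = x \<and> last p = c0" if x: "x \<in> W" for x
  proof -
    consider "x = c0" | "{x,c0} \<in> F" | y where "{x,y} \<in> F" "{y,c0} \<in> F" using reach x by blast
    then show ?thesis
    proof cases
      case 1 then show ?thesis using x by (intro exI[of _ "[x]"]) (auto simp: walk_def)
    next
      case 2 then show ?thesis using x c0 by (intro exI[of _ "[x,c0]"]) (auto simp: walk_Cons)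
    next
      case 3
      then have "y \<in> W" using edges by auto
      then show ?thesis using 3 x c0 by (intro exI[of _ "[x,y,c0]"]) (auto simp: walk_Cons)
    qed
  qed
  have conn: "\<exists>xs. is_path W F x y xs" if xy: "x \<in> W" "y \<in> W" for x y
  proof -
    obtain p where p: "walk W F p" "hd p = x" "last p = c0" using tow xy by blast
    obtain q where q: "walk W F q" "hd q = y" "last q = c0" using tow xy by blast
    have rq: "walk W F (rev q)" "hd (rev q) = c0" "last (rev q) = y" "rev q \<noteq> []"
      using q walk_rev[OF q(1)] by (auto simp: walk_def hd_rev last_rev)
    have pne: "p \<noteq> []" using p by (simp add: walk_def)
    have w: "walk W F (p @ tl (rev q))" using walk_concat[OF p(1) rq(1)] p rq by simp
    have "hd (p @ tl (rev q)) = x" using p pne by simp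
    moreover have "last (p @ tl (rev q)) = y" using last_concat[of p "rev q"] p rq pne by simp
    ultimately show ?thesis using walk_path[OF w] is_path_walk by metis
  qed
  have nocyc: False if cy: "is_cycle W F xs" for xs
  proof -
    let ?l = "length xs"
    have l: "?l \<ge> 3" "distinct xs" and st: "\<forall>i. Suc i < ?l \<longrightarrow> {xs ! i, xs ! Suc i} \<in> F"
      and lh: "{last xs, hd xs} \<in> F" using cy unfolding is_cycle_def by auto
    have hd: "hd xs = xs ! 0" using l by (intro hd_conv_nth) auto
    have lst: "last xs = xs ! (?l - 1)" using l by (intro last_conv_nth) auto
    have ne: "\<And>i j. i < ?l \<Longrightarrow> j < ?l \<Longrightarrow> i \<noteq> j \<Longrightarrow> xs ! i \<noteq> xs ! j"
      using l(2) by (simp add: nth_eq_iff_index_eq)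
    have e01: "{xs!0, xs!1} \<in> F" using st l by auto
    have e12: "{xs!1, xs!2} \<in> F" using st[rule_format, of 1] l by (auto simp: numeral_2_eq_2)
    have s1: "Suc (?l-2) < ?l" "Suc (?l-2) = ?l-1" using l by auto
    have eL: "{xs!(?l-2), xs!(?l-1)} \<in> F" using st[rule_format, of "?l-2"] s1 by simp
    have eLh: "{xs!(?l-1), xs!0} \<in> F" using lh hd lst by simp
    have c0': "xs!0 \<in> C"
      using leaf[of "xs!0" "xs!1" "xs!(?l-1)"] e01 eLh ne[of 1 "?l-1"] l by (simp add: insert_commute)
    have xne: "xs \<noteq> []" using l by auto
    have c1: "xs!1 \<in> C"
      using leaf[of "xs!1" "xs!0" "xs!2"] e01 e12 ne[of 0 2] l xne by (simp add: insert_commute)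
    have c2: "xs!(?l-1) \<in> C"
      using leaf[of "xs!(?l-1)" "xs!(?l-2)" "xs!0"] eL eLh ne[of "?l-2" 0] l xne by (simp add: insert_commute)
    have "card {xs!0, xs!1, xs!(?l-1)} = 3" using ne[of 0 1] ne[of 0 "?l-1"] ne[of 1 "?l-1"] l xne by auto
    moreover have "card {xs!0, xs!1, xs!(?l-1)} \<le> card C"
      using c0' c1 c2 cC by (intro card_mono) auto
    ultimately show False using cC by simp
  qed
  show "is_tree W F" unfolding is_tree_def using fin c0 edges conn nocyc by blast
qed

lemma tree_edges:
  assumes T: "is_tree W F"
  shows "card W \<le> card F + 1"
proof -
  have fin: "finite W" and edges: "\<forall>e\<in>F. card e = 2 \<and> e \<subseteq> W"
    and conn: "\<forall>x\<in>W. \<forall>y\<in>W. \<exists>xs. is_path W F x y xs" and ne: "W \<noteq> {}"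
    using T unfolding is_tree_def by auto
  have finF: "finite F" using fin edges by (meson PowI finite_Pow_iff finite_subset subsetI)
  obtain r where r: "r \<in> W" using ne by blast
  define d where "d w = (LEAST l. \<exists>xs. is_path W F r w xs \<and> length xs = l)" for w
  have pred: "\<exists>y. {y, w} \<in> F \<and> d y < d w" if w: "w \<in> W" "w \<noteq> r" for w
  proof -
    have "\<exists>l xs. is_path W F r w xs \<and> length xs = l" using conn r w by blast
    then have "\<exists>xs. is_path W F r w xs \<and> length xs = d w"
      unfolding d_def by (rule LeastI_ex)
    then obtain xs where xs: "is_path W F r w xs" "length xs = d w" by blast
    have nn: "xs \<noteq> []" "hd xs = r" "last xs = w" "distinct xs" "set xs \<subseteq> W"
      and st: "\<forall>i. Suc i < length xs \<longrightarrow> {xs ! i, xs ! Suc i} \<in> F"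
      using xs(1) unfolding is_path_def by auto
    have l2: "length xs \<ge> 2"
    proof (rule ccontr)
      assume "\<not> 2 \<le> length xs"
      moreover have "length xs \<noteq> 0" using nn(1) by simp
      ultimately have "length xs = 1" by arith
      then have "hd xs = last xs" by (cases xs) auto
      then show False using nn w by simp
    qed
    define ys where "ys = butlast xs"
    define y where "y = last ys"
    have yn: "ys \<noteq> []" using l2 unfolding ys_def by (cases xs) auto
    have ypath: "is_path W F r y ys" unfolding is_path_def
    proof (intro conjI allI impI)
      show "ys \<noteq> []" by (rule yn)
      show "hd ys = r" using nn yn unfolding ys_def by (cases xs) auto 
      show "last ys = y" by (simp add: y_def)
      show "distinct ys" using nn by (simp add: ys_def distinct_butlast)
      show "set ys \<subseteq> W" using nn by (metis ys_def in_set_butlastD subset_iff)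
      fix i assume "Suc i < length ys"
      then show "{ys ! i, ys ! Suc i} \<in> F" using st by (simp add: ys_def nth_butlast)
    qed
    have "d y \<le> length ys" unfolding d_def using ypath by (metis (mono_tags, lifting) Least_le)
    moreover have "length ys < length xs" using nn(1) by (simp add: ys_def)
    ultimately have dy: "d y < d w" using xs(2) by simp
    have "y = xs ! (length xs - 2)" using yn l2 unfolding y_def ys_def
      by (simp add: last_conv_nth nth_butlast numeral_2_eq_2)
    moreover have "w = xs ! (length xs - 1)" using nn by (simp add: last_conv_nth)
    moreover have "{xs ! (length xs - 2), xs ! Suc (length xs - 2)} \<in> F" using st l2 by simp
    moreover have "Suc (length xs - 2) = length xs - 1" using l2 by simp
    ultimately show ?thesis using dy by auto
  qed
  define p where "p w = (SOME y. {y, w} \<in> F \<and> d y < d w)" for w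
  have p: "{p w, w} \<in> F \<and> d (p w) < d w" if "w \<in> W - {r}" for w
    using pred[of w] that unfolding p_def by (metis (mono_tags, lifting) DiffE insertI1 someI_ex)
  have inj: "inj_on (\<lambda>w. {p w, w}) (W - {r})"
  proof (rule inj_onI)
    fix w w' assume a: "w \<in> W - {r}" "w' \<in> W - {r}" "{p w, w} = {p w', w'}"
    show "w = w'"
    proof (rule ccontr)
      assume "w \<noteq> w'"
      then have "p w = w'" "p w' = w" using a(3) by (auto simp: doubleton_eq_iff)
      then show False using p[OF a(1)] p[OF a(2)] by simp
    qed
  qed
  have "card (W - {r}) \<le> card F"
    using card_inj_on_le[OF inj _ finF] p by blast
  then show ?thesis using r fin by (simp add: card_Diff_singleton)
qed

lemma upper:
  assumes V: "finite V" and SV: "S \<subseteq> V" and cs: "card S = s" and s2: "2 \<le> s"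
    and cf: "cis_family V E S k T"
  shows "k \<le> (card V - s) + s div 2"
proof -
  have st: "\<And>i. i < k \<Longrightarrow> steiner_tree V E S (T i)" using cf unfolding cis_family_def by auto
  have vint: "\<And>i j. i < k \<Longrightarrow> j < k \<Longrightarrow> i \<noteq> j \<Longrightarrow> fst (T i) \<inter> fst (T j) = S"
    using cf unfolding cis_family_def by (metis inf_commute linorder_neqE_nat)
  have eint: "\<And>i j. i < k \<Longrightarrow> j < k \<Longrightarrow> i \<noteq> j \<Longrightarrow> snd (T i) \<inter> snd (T j) = {}"
    using cf unfolding cis_family_def by (metis inf_commute linorder_neqE_nat)
  define I1 where "I1 = {i. i < k \<and> fst (T i) \<noteq> S}"
  define I2 where "I2 = {i. i < k \<and> fst (T i) = S}"
  have k: "k = card I1 + card I2"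
  proof -
    have "{..<k} = I1 \<union> I2" "I1 \<inter> I2 = {}" unfolding I1_def I2_def by auto
    moreover have "finite I1" "finite I2" unfolding I1_def I2_def by auto
    ultimately show ?thesis using card_Un_disjoint[of I1 I2] by (metis card_lessThan)
  qed
  have sub: "\<And>i. i < k \<Longrightarrow> S \<subseteq> fst (T i) \<and> fst (T i) \<subseteq> V"
    using st unfolding steiner_tree_def by auto
  define f where "f i = (SOME x. x \<in> fst (T i) - S)" for i
  have f: "f i \<in> fst (T i) - S" if "i \<in> I1" for i
  proof -
    have "\<exists>x. x \<in> fst (T i) - S" using that sub[of i] unfolding I1_def by auto
    then show ?thesis unfolding f_def by (rule someI_ex)
  qed
  have "inj_on f I1"
  proof (rule inj_onI)
    fix i j assume a: "i \<in> I1" "j \<in> I1" "f i = f j"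
    show "i = j"
    proof (rule ccontr)
      assume "i \<noteq> j"
      then have "fst (T i) \<inter> fst (T j) = S" using vint a unfolding I1_def by auto
      then show False using f[OF a(1)] f[OF a(2)] a(3) by auto
    qed
  qed
  moreover have "f ` I1 \<subseteq> V - S" using f sub unfolding I1_def by fastforce
  ultimately have c1: "card I1 \<le> card V - s"
    using card_inj_on_le[of f I1 "V - S"] V SV cs by (simp add: card_Diff_subset finite_subset)
  have finS: "finite S" using V SV finite_subset by blast
  have tr: "\<And>i. i \<in> I2 \<Longrightarrow> is_tree S (snd (T i))" using st unfolding steiner_tree_def I2_def by auto
  have edgesS: "\<And>i. i \<in> I2 \<Longrightarrow> snd (T i) \<subseteq> {e. e \<subseteq> S \<and> card e = 2}"
    using tr unfolding is_tree_def by blast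
  have finE: "\<And>i. i \<in> I2 \<Longrightarrow> finite (snd (T i))"
  proof -
    fix i assume "i \<in> I2"
    then have "snd (T i) \<subseteq> Pow S" using edgesS by blast
    then show "finite (snd (T i))" using finS by (meson finite_Pow_iff finite_subset)
  qed
  have ge: "\<And>i. i \<in> I2 \<Longrightarrow> s - 1 \<le> card (snd (T i))"
    using tree_edges tr cs by fastforce
  have "card I2 * (s - 1) \<le> (\<Sum>i\<in>I2. card (snd (T i)))"
    using ge sum_mono[of I2 "\<lambda>_. s - 1" "\<lambda>i. card (snd (T i))"] by simp
  also have "\<dots> = card (\<Union>i\<in>I2. snd (T i))"
    by (rule card_UN_disjoint[symmetric]) (use finE eint in \<open>auto simp: I2_def\<close>)
  also have "\<dots> \<le> card {e. e \<subseteq> S \<and> card e = 2}"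
    by (rule card_mono) (use finS edgesS in auto)
  also have "\<dots> = s * (s - 1) div 2" using n_subsets[OF finS, of 2] cs by (simp add: choose_two)
  finally have "card I2 * (s - 1) \<le> s * (s - 1) div 2" .
  then have "card I2 * (s - 1) * 2 \<le> s * (s - 1)" by linarith
  then have "(card I2 * 2) * (s - 1) \<le> s * (s - 1)" by (simp add: algebra_simps)
  then have "card I2 * 2 \<le> s" using s2 by simp
  then have "card I2 \<le> s div 2" by linarith
  then show ?thesis using k c1 by linarith
qed

definition gI :: "nat \<Rightarrow> nat \<Rightarrow> nat" where
  "gI i t = 2*i + (if i < t div 2 then t mod 2 else 1 - t mod 2)"

definition EI :: "nat \<Rightarrow> nat \<Rightarrow> nat set set" where
  "EI s i = {{t, gI i t} | t. t < s \<and> t div 2 \<noteq> i} \<union> {{2*i, Suc (2*i)}}"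

lemma gI_div: "gI i t div 2 = i" unfolding gI_def by auto

lemma gI_lt: "i < s div 2 \<Longrightarrow> gI i t < s" unfolding gI_def by auto

lemma EI_form: "i < s div 2 \<Longrightarrow> e \<in> EI s i \<Longrightarrow> \<exists>p q. e = {p,q} \<and> p \<noteq> q \<and> p < s \<and> q < s"
proof -
  assume i: "i < s div 2" and e: "e \<in> EI s i"
  show ?thesis
  proof (cases "e = {2*i, Suc (2*i)}")
    case True then show ?thesis using i by (intro exI[of _ "2*i"] exI[of _ "Suc (2*i)"]) auto
  next
    case False
    then obtain t where t: "e = {t, gI i t}" "t < s" "t div 2 \<noteq> i" using e unfolding EI_def by blast
    have "t \<noteq> gI i t" using t(3) gI_div[of i t] by metis
    then show ?thesis using t gI_lt[OF i] by blast
  qed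
qed

lemma EI_leaf: assumes "{p,q} \<in> EI s i" "{p,r} \<in> EI s i" "q \<noteq> r" shows "p div 2 = i"
proof (rule ccontr)
  assume np: "p div 2 \<noteq> i"
  have "q = gI i p" using assms(1) np gI_div[of i] unfolding EI_def by (auto simp: doubleton_eq_iff)
  moreover have "r = gI i p" using assms(2) np gI_div[of i] unfolding EI_def by (auto simp: doubleton_eq_iff)
  ultimately show False using assms(3) by simp
qed

lemma EI_reach: assumes "i < s div 2" "t < s"
  shows "t = 2*i \<or> {t, 2*i} \<in> EI s i \<or> (\<exists>y. {t,y} \<in> EI s i \<and> {y, 2*i} \<in> EI s i)"
proof (cases "t div 2 = i")
  case True
  then have "t = 2*i \<or> t = Suc (2*i)" by auto
  then show ?thesis unfolding EI_def by (auto simp: insert_commute)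
next
  case False
  have e: "{t, gI i t} \<in> EI s i" using False assms unfolding EI_def by auto
  have "gI i t = 2*i \<or> gI i t = Suc (2*i)" unfolding gI_def by auto
  then show ?thesis
  proof
    assume "gI i t = 2*i" then show ?thesis using e by auto
  next
    assume a: "gI i t = Suc (2*i)"
    have "{Suc (2*i), 2*i} \<in> EI s i" unfolding EI_def by (auto simp: insert_commute)
    then show ?thesis using e a by (intro disjI2 exI[of _ "Suc (2*i)"]) auto
  qed
qed

lemma par1: assumes "(t'::nat) = 2*i + (1 - t mod 2)" "t = 2*j + t' mod 2" shows False
proof (cases "t mod 2 = 0")
  case True
  then have "t' = Suc (2*i)" using assms(1) by simp
  then have "t' mod 2 = 1" by simp
  then have "t = Suc (2*j)" using assms(2) by simp
  then show False using True by simp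
next
  case False
  then have t1: "t mod 2 = 1" by simp
  then have "t' = 2*i" using assms(1) by simp
  then have "t' mod 2 = 0" by simp
  then have "t = 2*j" using assms(2) by simp
  then show False using t1 by simp
qed
lemma par2: assumes "(t'::nat) = 2*i + t mod 2" "t = 2*j + (1 - t' mod 2)" shows False
proof (cases "t mod 2 = 0")
  case True
  then have "t' = 2*i" using assms(1) by simp
  then have "t' mod 2 = 0" by simp
  then have "t = Suc (2*j)" using assms(2) by simp
  then show False using True by simp
next
  case False
  then have t1: "t mod 2 = 1" by simp
  then have "t' = Suc (2*i)" using assms(1) by simp
  then have "t' mod 2 = 1" by simp
  then have "t = 2*j" using assms(2) by simp
  then show False using t1 by simp
qed

lemma EI_disj: assumes "i \<noteq> j" shows "EI s i \<inter> EI s j = {}"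
proof (rule ccontr)
  assume "EI s i \<inter> EI s j \<noteq> {}"
  then obtain e where e: "e \<in> EI s i" "e \<in> EI s j" by blast
  have key: "\<And>t t'. t div 2 \<noteq> i \<Longrightarrow> t' div 2 \<noteq> j \<Longrightarrow> {t, gI i t} = {t', gI j t'} \<Longrightarrow> False"
  proof -
    fix t t' assume a: "t div 2 \<noteq> i" "t' div 2 \<noteq> j" "{t, gI i t} = {t', gI j t'}"
    have di: "gI i t div 2 = i" "gI j t' div 2 = j" by (rule gI_div)+
    from a(3) consider "t = t'" "gI i t = gI j t'" | "t = gI j t'" "gI i t = t'"
      by (auto simp: doubleton_eq_iff)
    then show False
    proof cases
      case 1 then show False using di assms by simp
    next
      case 2
      then have tj: "t div 2 = j" and ti: "t' div 2 = i" using di by auto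
      show False
      proof (cases "i < j")
        case True
        have "gI i t = 2*i + t mod 2" using True tj by (simp add: gI_def)
        moreover have "gI j t' = 2*j + (1 - t' mod 2)" using ti True by (simp add: gI_def)
        ultimately have "t' = 2*i + t mod 2 \<and> t = 2*j + (1 - t' mod 2)" using 2 by linarith
        then show False using par2 by blast
      next
        case False
        then have ji: "j < i" using assms by simp
        have "gI i t = 2*i + (1 - t mod 2)" using ji tj by (simp add: gI_def)
        moreover have "gI j t' = 2*j + t' mod 2" using ti ji by (simp add: gI_def)
        ultimately have "t' = 2*i + (1 - t mod 2) \<and> t = 2*j + t' mod 2" using 2 by linarith
        then show False using par1 by blast
      qed
    qed
  qed
  have pairg: "i' = i0" if "{t, gI i' t} = {2*i0, Suc (2*i0)}" for t i' i0
  proof -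
    have "gI i' t = 2*i0 \<or> gI i' t = Suc (2*i0)" using that by (auto simp: doubleton_eq_iff)
    then have "gI i' t div 2 = i0" by auto
    then show ?thesis using gI_div[of i' t] by simp
  qed
  have pair: "\<And>t i'. t div 2 \<noteq> i' \<Longrightarrow> {t, gI i' t} \<noteq> {2*i, Suc (2*i)} \<or> i' = i"
    using pairg by blast
  have pair2: "\<And>t i'. t div 2 \<noteq> i' \<Longrightarrow> {t, gI i' t} \<noteq> {2*j, Suc (2*j)} \<or> i' = j"
    using pairg by blast
  have pp: "{2*i, Suc (2*i)} \<noteq> {2*j, Suc (2*j)}" using assms by (auto simp: doubleton_eq_iff)
  have c1: "(\<exists>t. e = {t, gI i t} \<and> t div 2 \<noteq> i) \<or> e = {2*i, Suc (2*i)}"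
    using e(1) unfolding EI_def by blast
  have c2: "(\<exists>t'. e = {t', gI j t'} \<and> t' div 2 \<noteq> j) \<or> e = {2*j, Suc (2*j)}"
    using e(2) unfolding EI_def by blast
  show False
  proof (cases "e = {2*i, Suc (2*i)}")
    case True
    then show False using c2 pp pair assms by blast
  next
    case False
    then obtain t where t: "e = {t, gI i t}" "t div 2 \<noteq> i" using c1 by blast
    show False using c2
    proof
      assume "\<exists>t'. e = {t', gI j t'} \<and> t' div 2 \<noteq> j"
      then obtain t' where "e = {t', gI j t'}" "t' div 2 \<noteq> j" by blast
      then show False using key[of t t'] t by simp
    next
      assume "e = {2*j, Suc (2*j)}"
      then show False using pair2[of t i] t assms by simp
    qed
  qed
qed

lemma F_mem:
  assumes i: "i < s div 2" and m: "{x,y} \<in> (`) h ` EI s i"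
  shows "\<exists>p q. x = h p \<and> y = h q \<and> {p,q} \<in> EI s i \<and> p < s \<and> q < s"
proof -
  obtain e where e: "e \<in> EI s i" "{x,y} = h ` e" using m by blast
  obtain p q where pq: "e = {p,q}" "p < s" "q < s" using EI_form[OF i e(1)] by blast
  have "{x,y} = {h p, h q}" using e pq by simp
  then have "(x = h p \<and> y = h q) \<or> (x = h q \<and> y = h p)" by (auto simp: doubleton_eq_iff)
  then show ?thesis
  proof
    assume "x = h p \<and> y = h q" then show ?thesis using e pq by blast
  next
    assume "x = h q \<and> y = h p" then show ?thesis using e pq by (metis insert_commute)
  qed
qed

lemma stree:
  assumes h: "inj_on h {..<s}" and i: "i < s div 2"
  shows "is_tree (h ` {..<s}) ((`) h ` EI s i)"
    "\<And>x y P. is_path (h ` {..<s}) ((`) h ` EI s i) x y P \<Longrightarrow> interior P \<subseteq> {h (2*i), h (Suc (2*i))}"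
    "\<forall>e\<in>(`) h ` EI s i. card e = 2 \<and> e \<subseteq> h ` {..<s}"
proof -
  let ?W = "h ` {..<s}" and ?F = "(`) h ` EI s i" and ?C = "{h (2*i), h (Suc (2*i))}"
  have is2: "2*i < s" "Suc (2*i) < s" using i by auto
  show edges: "\<forall>e\<in>?F. card e = 2 \<and> e \<subseteq> ?W"
  proof
    fix e assume "e \<in> ?F"
    then obtain e' where e': "e' \<in> EI s i" "e = h ` e'" by blast
    obtain p q where pq: "e' = {p,q}" "p \<noteq> q" "p < s" "q < s" using EI_form[OF i e'(1)] by blast
    have "h p \<noteq> h q" using h pq by (auto dest: inj_onD)
    then show "card e = 2 \<and> e \<subseteq> ?W" using e' pq by auto
  qed
  have leaf: "a \<in> ?C" if ab: "{a,b} \<in> ?F" "{a,c} \<in> ?F" "b \<noteq> c" for a b c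
  proof -
    obtain p q where 1: "a = h p" "b = h q" "{p,q} \<in> EI s i" "p < s" "q < s" using F_mem[OF i ab(1)] by blast
    obtain p' r where 2: "a = h p'" "c = h r" "{p',r} \<in> EI s i" "p' < s" "r < s" using F_mem[OF i ab(2)] by blast
    have "p' = p" using 1 2 h by (auto dest: inj_onD)
    moreover have "q \<noteq> r" using 1 2 ab(3) by auto
    ultimately have "p div 2 = i" using EI_leaf 1 2 by metis
    then have "p = 2*i \<or> p = Suc (2*i)" by auto
    then show ?thesis using 1 by auto
  qed
  have reach: "\<forall>x\<in>?W. x = h (2*i) \<or> {x, h (2*i)} \<in> ?F \<or> (\<exists>y. {x,y} \<in> ?F \<and> {y, h (2*i)} \<in> ?F)"
  proof
    fix x assume "x \<in> ?W"
    then obtain t where t: "x = h t" "t < s" by blast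
    have im: "\<And>a b. {a,b} \<in> EI s i \<Longrightarrow> {h a, h b} \<in> ?F"
      by (metis image_empty image_eqI image_insert)
    show "x = h (2*i) \<or> {x, h (2*i)} \<in> ?F \<or> (\<exists>y. {x,y} \<in> ?F \<and> {y, h (2*i)} \<in> ?F)"
      using EI_reach[OF i t(2)] im t by metis
  qed
  have cC: "card ?C \<le> 2" by (auto simp: card_insert_if)
  have "is_tree ?W ?F \<and> (\<forall>x y P. is_path ?W ?F x y P \<longrightarrow> interior P \<subseteq> ?C)"
    using gen_tree[of ?W ?F "h (2*i)" ?C] edges is2 leaf cC reach by blast
  then show "is_tree ?W ?F" "\<And>x y P. is_path ?W ?F x y P \<Longrightarrow> interior P \<subseteq> ?C" by auto
qed

lemma star:
  assumes S: "finite S" "v \<notin> S" "2 \<le> card S"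
  shows "is_tree (insert v S) {{v,x} | x. x \<in> S}"
    "\<And>x y P. is_path (insert v S) {{v,x} | x. x \<in> S} x y P \<Longrightarrow> interior P \<subseteq> {v}"
    "\<forall>e\<in>{{v,x} | x. x \<in> S}. card e = 2 \<and> e \<subseteq> insert v S"
    "tree_degree {{v,x} | x. x \<in> S} v = card S"
proof -
  let ?W = "insert v S" and ?F = "{{v,x} | x. x \<in> S}"
  have "card {v,x} = 2" if "x \<in> S" for x
  proof -
    have "v \<noteq> x" using S that by auto
    then show ?thesis by simp
  qed
  then show edges: "\<forall>e\<in>?F. card e = 2 \<and> e \<subseteq> ?W" by auto
  have leaf: "a \<in> {v}" if "{a,b} \<in> ?F" "{a,c} \<in> ?F" "b \<noteq> c" for a b c
    using that by (auto simp: doubleton_eq_iff)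
  have reach: "\<forall>x\<in>?W. x = v \<or> {x, v} \<in> ?F \<or> (\<exists>y. {x,y} \<in> ?F \<and> {y, v} \<in> ?F)"
    by (auto simp: insert_commute)
  have "is_tree ?W ?F \<and> (\<forall>x y P. is_path ?W ?F x y P \<longrightarrow> interior P \<subseteq> {v})"
    using gen_tree[of ?W ?F v "{v}"] edges leaf reach S by auto
  then show "is_tree ?W ?F" "\<And>x y P. is_path ?W ?F x y P \<Longrightarrow> interior P \<subseteq> {v}" by auto
  have "{e \<in> ?F. v \<in> e} = (\<lambda>x. {v,x}) ` S" by auto
  moreover have "inj_on (\<lambda>x. {v,x}) S" using S by (auto intro!: inj_onI simp: doubleton_eq_iff)
  ultimately show "tree_degree ?F v = card S" unfolding tree_degree_def by (simp add: card_image)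
qed

lemma edgeE: "e \<subseteq> {..<n} \<Longrightarrow> card e = 2 \<Longrightarrow> e \<in> Kn_E n"
  unfolding Kn_E_def by (auto simp: card_2_iff)

lemma lower:
  assumes SV: "S \<subseteq> {..<n}" and cs: "card S = s" and s2: "2 \<le> s" and sn: "s \<le> n"
  shows "\<exists>T. cis_family (Kn_V n) (Kn_E n) S (s div 2 + (n - s)) T"
proof -
  let ?V = "Kn_V n" and ?E = "Kn_E n"
  define m where "m = s div 2"
  define k where "k = m + (n - s)"
  have finS: "finite S" using SV finite_subset by blast
  obtain h where hb: "bij_betw h {0..<s} S" using ex_bij_betw_nat_finite[OF finS] cs by blast
  have h: "inj_on h {..<s}" "h ` {..<s} = S" using hb by (auto simp: bij_betw_def atLeast0LessThan)
  have cO: "card ({..<n} - S) = n - s" using SV cs by (simp add: card_Diff_subset finS)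
  obtain ov where ob: "bij_betw ov {0..<n - s} ({..<n} - S)"
    using ex_bij_betw_nat_finite[of "{..<n} - S"] cO by auto
  have ov: "inj_on ov {..<n-s}" "\<And>j. j < n - s \<Longrightarrow> ov j \<in> {..<n} - S"
    using ob by (auto simp: bij_betw_def atLeast0LessThan)
  define T where "T j = (if j < m then (S, (`) h ` EI s j)
      else (insert (ov (j - m)) S, {{ov (j - m), x} | x. x \<in> S}))" for j
  define cen where "cen j = (if j < m then {h (2*j), h (Suc (2*j))} else {ov (j - m)})" for j
  have Vn: "?V = {..<n}" by (simp add: Kn_V_def)
  have csS: "2 \<le> card S" using cs s2 by simp
  have tprop: "steiner_tree ?V ?E S (T j) \<and> (\<forall>x y P. is_path (fst (T j)) (snd (T j)) x y P \<longrightarrow> interior P \<subseteq> cen j)"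
    if j: "j < k" for j
  proof (cases "j < m")
    case True
    have jm: "j < s div 2" using True m_def by simp
    note st = stree[OF h(1) jm, unfolded h(2)]
    have "snd (T j) \<subseteq> ?E" using st(3) SV True unfolding T_def by (auto intro!: edgeE)
    then have "steiner_tree ?V ?E S (T j)" unfolding steiner_tree_def using True st(1) SV Vn
      by (simp add: T_def)
    then show ?thesis using st(2) True by (simp add: T_def cen_def)
  next
    case False
    let ?v = "ov (j - m)"
    have v: "?v \<in> {..<n}" "?v \<notin> S" using ov(2)[of "j - m"] j False k_def by auto
    note st = star[OF finS v(2) csS]
    have "snd (T j) \<subseteq> ?E" using st(3) SV v False unfolding T_def by (auto intro!: edgeE)
    moreover have "tree_degree (snd (T j)) ?v \<noteq> 1" using st(4) csS False by (simp add: T_def)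
    ultimately have "steiner_tree ?V ?E S (T j)" unfolding steiner_tree_def using False st(1) SV Vn v
      by (auto simp: T_def)
    then show ?thesis using st(2) False by (simp add: T_def cen_def)
  qed
  have pw: "snd (T p) \<inter> snd (T q) = {} \<and> fst (T p) \<inter> fst (T q) = S \<and> cen p \<inter> cen q = {}"
    if pq: "p < q" "q < k" for p q
  proof (cases "q < m")
    case True
    then have pm: "p < s div 2" "q < s div 2" using pq m_def by auto
    have "snd (T p) \<inter> snd (T q) = {}"
    proof (rule ccontr)
      assume "snd (T p) \<inter> snd (T q) \<noteq> {}"
      then obtain e1 e2 where e: "e1 \<in> EI s p" "e2 \<in> EI s q" "h ` e1 = h ` e2"
        using True pq unfolding T_def by auto
      have "e1 \<subseteq> {..<s}" "e2 \<subseteq> {..<s}" using EI_form[OF pm(1) e(1)] EI_form[OF pm(2) e(2)] by auto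
      then have "e1 = e2" using e(3) inj_on_image_eq_iff[OF h(1)] by blast
      then show False using EI_disj[of p q s] e pq by auto
    qed
    moreover have "cen p \<inter> cen q = {}"
    proof -
      have "2*p < s" "Suc (2*p) < s" "2*q < s" "Suc (2*q) < s" using pm by auto
      then have "h (2*p) \<noteq> h (2*q)" "h (2*p) \<noteq> h (Suc (2*q))" "h (Suc (2*p)) \<noteq> h (2*q)"
        "h (Suc (2*p)) \<noteq> h (Suc (2*q))" using pq h(1) by (auto simp: inj_on_eq_iff)
      then show ?thesis using True pq unfolding cen_def by auto
    qed
    ultimately show ?thesis using True pq by (simp add: T_def)
  next
    case False
    let ?w = "ov (q - m)"
    have w: "?w \<notin> S" using ov(2)[of "q - m"] pq False k_def by auto
    show ?thesis
    proof (cases "p < m")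
      case True
      have pm: "p < s div 2" using True m_def by simp
      have "\<forall>e\<in>snd (T p). e \<subseteq> S" using stree(3)[OF h(1) pm] h(2) True by (simp add: T_def)
      moreover have "\<forall>e\<in>snd (T q). ?w \<in> e" using False by (auto simp: T_def)
      ultimately have "snd (T p) \<inter> snd (T q) = {}" using w by blast
      moreover have "cen p \<subseteq> S" using h True pm unfolding cen_def by auto
      ultimately show ?thesis using True False w by (auto simp: T_def cen_def)
    next
      case pF: False
      let ?u = "ov (p - m)"
      have u: "?u \<notin> S" using ov(2)[of "p - m"] pq pF k_def by auto
      have "p - m \<noteq> q - m" "p - m < n - s" "q - m < n - s" using pq pF False k_def by auto
      then have uw: "?u \<noteq> ?w" using ov(1) by (auto dest: inj_onD)
      have "snd (T p) \<inter> snd (T q) = {}" using u w uw pF False by (auto simp: T_def doubleton_eq_iff)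
      then show ?thesis using u w uw pF False by (auto simp: T_def cen_def)
    qed
  qed
  have c1: "\<forall>i<k. steiner_tree ?V ?E S (T i)" using tprop by blast
  have c2: "\<forall>p q. p < q \<and> q < k \<longrightarrow>
        snd (T p) \<inter> snd (T q) = {} \<and> fst (T p) \<inter> fst (T q) = S \<and>
        (\<forall>x1\<in>S. \<forall>x2\<in>S. \<forall>P Q. is_path (fst (T p)) (snd (T p)) x1 x2 P \<and>
             is_path (fst (T q)) (snd (T q)) x1 x2 Q \<longrightarrow> interior P \<inter> interior Q = {})"
  proof (intro allI impI conjI)
    fix p q assume a: "p < q \<and> q < k"
    show "snd (T p) \<inter> snd (T q) = {}" "fst (T p) \<inter> fst (T q) = S" using pw a by auto
    show "\<forall>x1\<in>S. \<forall>x2\<in>S. \<forall>P Q. is_path (fst (T p)) (snd (T p)) x1 x2 P \<and>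
             is_path (fst (T q)) (snd (T q)) x1 x2 Q \<longrightarrow> interior P \<inter> interior Q = {}"
    proof (intro ballI allI impI)
      fix x1 x2 P Q assume b: "is_path (fst (T p)) (snd (T p)) x1 x2 P \<and> is_path (fst (T q)) (snd (T q)) x1 x2 Q"
      have "p < k" using a by simp
      then have "interior P \<subseteq> cen p" using tprop[of p] b by blast
      moreover have "interior Q \<subseteq> cen q" using tprop[of q] a b by blast
      ultimately show "interior P \<inter> interior Q = {}" using pw[of p q] a by blast
    qed
  qed
  have "cis_family ?V ?E S k T" unfolding cis_family_def using c1 c2 by blast
  then show ?thesis unfolding k_def m_def by blast
qed

lemma ceil_half: "nat \<lceil>real s / 2\<rceil> = s - s div 2"
proof (cases "even s")
  case True
  then obtain q where "s = 2*q" by blast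
  then show ?thesis by simp
next
  case False
  then obtain q where q: "s = 2*q + 1" using oddE by blast
  have "real s / 2 = real q + 1/2" using q by simp
  then have "\<lceil>real s / 2\<rceil> = int q + 1" by (simp add: ceiling_eq_iff)
  then show ?thesis using q by simp
qed

theorem corollary2p7:
  fixes n s :: nat
  assumes "2 \<le> s" and "s \<le> n" and "4 \<le> n"
  shows "kappa_s (Kn_V n) (Kn_E n) s = n - nat \<lceil>real s / 2\<rceil>"
proof -
  define N where "N = s div 2 + (n - s)"
  have ks: "kappa_star (Kn_V n) (Kn_E n) S = N" if S: "S \<subseteq> Kn_V n" "card S = s" for S
  proof -
    let ?A = "{k. \<exists>T. cis_family (Kn_V n) (Kn_E n) S k T}"
    have ub: "\<forall>k\<in>?A. k \<le> N"
    proof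
      fix k assume "k \<in> ?A"
      then obtain T where "cis_family (Kn_V n) (Kn_E n) S k T" by blast
      from upper[OF _ S(1) S(2) assms(1) this] show "k \<le> N" by (simp add: Kn_V_def N_def)
    qed
    have "N \<in> ?A" using lower[of S n s] S assms unfolding N_def Kn_V_def by simp
    moreover have "finite ?A" using ub by (meson finite_atMost finite_subset atMost_iff subsetI)
    ultimately show ?thesis unfolding kappa_star_def using ub by (intro Max_eqI) auto
  qed
  have ex: "{..<s} \<subseteq> Kn_V n \<and> card {..<s} = s" using assms by (auto simp: Kn_V_def)
  have "{kappa_star (Kn_V n) (Kn_E n) S | S. S \<subseteq> Kn_V n \<and> card S = s} = {N}"
    using ks ex by blast
  then have "kappa_s (Kn_V n) (Kn_E n) s = N" unfolding kappa_s_def by simp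
  then show ?thesis using ceil_half[of s] assms unfolding N_def by simp
qed

end
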